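(* Let $N\geq 2$, $1\le k\le N$, $D>0$, and let $C_F(N)$ be a constant such that $\lambda(F)\leq C_F(N)\sqrt{\delta(F)}$ for every set of finite perimeter $F\subseteq\mathbb R^N$ with $0<|F|<\infty$. Let $E\subseteq\mathbb R^N$ be a set of finite perimeter with $|E|=1$, $\mathrm{bar}(E)=0$, $\operatorname{diam}(E)<D$, and symmetric with respect to each coordinate hyperplane $\{x_i=0\}$ for $N-k+1<i\le N$. Set $\varepsilon=\big|\tfrac12-|E\cap\{x_1>0\}|\big|$. Then \[ \varepsilon\leq C_1\,D\,\sqrt{\delta(E)},\qquad\text{where } C_1=C_F(N)\Big(\frac{\omega_{N-1}}{\omega_N^{\frac{N-1}{N}}}+\frac{\omega_N^{1/N}}{2}\Big). \]
   Context: $\omega_j$ is the volume of the unit ball in $\mathbb R^j$. For a set of finite perimeter $E\subseteq\mathbb R^N$, $P(E)$ is its perimeter, $|E|$ its Lebesgue measure, $B(m)$ the ball centered at the origin of volume $m$; $\delta(E)=\frac{P(E)-P(B(m))}{P(B(m))}$ with $m=|E|$; $\lambda(E)=\inf_{x\in\mathbb R^N}\frac{|E\Delta(x+B(m))|}{|E|}$ (Fraenkel asymmetry); $\mathrm{bar}(E)=\frac1{|E|}\int_Ex\,dx$. Diameter is in the measure-theoretic sense (supremum of distances between Lebesgue points of $E$). Symmetry with respect to a hyperplane $\Pi$ means $R_\Pi(E)=E$ for the reflection $R_\Pi$ across $\Pi$. *)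

theory Defs
  imports "HOL-Analysis.Analysis"
begin

text \<open>Ambient space R^N is real^'n, N = CARD('n); the (linear) order on the index type
  numbers the coordinates 1..N.\<close>

definition coord_pos :: "'n::{finite,linorder} \<Rightarrow> nat" where
  "coord_pos i = card {j. j < i} + 1"

definition C1c_fields :: "(real^'n \<Rightarrow> real^'n) set" where
  "C1c_fields = {\<phi>. (\<exists>D. (\<forall>x. (\<phi> has_derivative D x) (at x)) \<and> (\<forall>v. continuous_on UNIV (\<lambda>x. D x v)))
                   \<and> bounded {x. \<phi> x \<noteq> 0}}"

definition divergence :: "(real^'n \<Rightarrow> real^'n) \<Rightarrow> real^'n \<Rightarrow> real" where
  "divergence \<phi> x = (\<Sum>i\<in>UNIV. (frechet_derivative \<phi> (at x) (axis i 1)) $ i)"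

definition perimeter_e :: "(real^'n) set \<Rightarrow> ereal" where
  "perimeter_e E = (SUP \<phi>\<in>{\<phi>\<in>C1c_fields. \<forall>x. norm (\<phi> x) \<le> 1}. ereal (integral E (divergence \<phi>)))"

definition finite_perimeter :: "(real^'n) set \<Rightarrow> bool" where
  "finite_perimeter E \<longleftrightarrow> E \<in> sets lebesgue \<and> perimeter_e E < \<infinity>"

definition perimeter :: "(real^'n) set \<Rightarrow> real" where
  "perimeter E = real_of_ereal (perimeter_e E)"

definition vol_ball :: "real \<Rightarrow> (real^'n) set" where
  "vol_ball m = ball 0 ((m / unit_ball_vol (real CARD('n))) powr (1 / real CARD('n)))"

definition deficit :: "(real^'n) set \<Rightarrow> real" where
  "deficit E = (let m = measure lebesgue E in
     (perimeter E - perimeter (vol_ball m :: (real^'n) set)) / perimeter (vol_ball m :: (real^'n) set))"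

definition fraenkel :: "(real^'n) set \<Rightarrow> real" where
  "fraenkel E = (let m = measure lebesgue E in
     (INF x. measure lebesgue ((E - (+) x ` vol_ball m) \<union> ((+) x ` vol_ball m - E)) / m))"

definition barycenter :: "(real^'n) set \<Rightarrow> real^'n" where
  "barycenter E = (1 / measure lebesgue E) *\<^sub>R integral E (\<lambda>x. x)"

definition lebesgue_point :: "(real^'n) set \<Rightarrow> real^'n \<Rightarrow> bool" where
  "lebesgue_point E x \<longleftrightarrow>
     ((\<lambda>r. measure lebesgue (E \<inter> ball x r) / measure lebesgue (ball x r)) \<longlongrightarrow> 1) (at_right 0)"

definition mt_diam :: "(real^'n) set \<Rightarrow> ereal" where
  "mt_diam E = (SUP p\<in>{(x,y). lebesgue_point E x \<and> lebesgue_point E y}. ereal (dist (fst p) (snd p)))"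

definition reflect_coord :: "'n \<Rightarrow> real^'n \<Rightarrow> real^'n" where
  "reflect_coord i x = (\<chi> j. if j = i then - (x $ j) else x $ j)"

end

theory Submission
  imports Defs
begin

lemma integrable_cont_bounded:
  fixes f :: "'a::euclidean_space \<Rightarrow> 'b::euclidean_space"
  assumes "S \<in> sets lebesgue" "bounded S" "continuous_on UNIV f"
  shows "f integrable_on S"
proof -
  obtain a b where ab: "S \<subseteq> cbox a b" using assms(2) bounded_subset_cbox_symmetric by blast
  have "f absolutely_integrable_on cbox a b"
    using assms(3) by (intro absolutely_integrable_continuous) (auto intro: continuous_on_subset)
  hence "f absolutely_integrable_on S"
    using set_integrable_subset[of lebesgue "cbox a b" f S] ab assms(1) by blast
  thus ?thesis using absolutely_integrable_on_def by blast
qed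

lemma integral_const_lm:
  "S \<in> lmeasurable \<Longrightarrow> integral S (\<lambda>_. c) = c * measure lebesgue S"
  using integral_cmul[of S c "\<lambda>_. 1::real"] lmeasure_integral[of S] by simp

lemma Qmem:
  fixes z x :: "'a::euclidean_space"
  shows "x \<in> cbox (z - R *\<^sub>R One) (z + R *\<^sub>R One) \<longleftrightarrow> (\<forall>b\<in>Basis. \<bar>x \<bullet> b - z \<bullet> b\<bar> \<le> R)"
proof -
  have e1: "(z - R *\<^sub>R One) \<bullet> b = z \<bullet> b - R" "(z + R *\<^sub>R One) \<bullet> b = z \<bullet> b + R" if "b \<in> Basis" for b
    using that by (simp_all add: inner_diff_left inner_add_left)
  show ?thesis unfolding mem_box
  proof (intro iffI ballI)
    fix b :: 'a assume "\<forall>i\<in>Basis. (z - R *\<^sub>R One) \<bullet> i \<le> x \<bullet> i \<and> x \<bullet> i \<le> (z + R *\<^sub>R One) \<bullet> i" "b \<in> Basis"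
    thus "\<bar>x \<bullet> b - z \<bullet> b\<bar> \<le> R" using e1[of b] by fastforce
  next
    fix b :: 'a assume "\<forall>b\<in>Basis. \<bar>x \<bullet> b - z \<bullet> b\<bar> \<le> R" "b \<in> Basis"
    thus "(z - R *\<^sub>R One) \<bullet> b \<le> x \<bullet> b \<and> x \<bullet> b \<le> (z + R *\<^sub>R One) \<bullet> b" using e1[of b] by fastforce
  qed
qed

lemma sym_has_integral:
  fixes f :: "'a::euclidean_space \<Rightarrow> real"
  assumes "bounded S" "\<And>x. x \<in> S \<Longrightarrow> 2 *\<^sub>R z - x \<in> S" "(f has_integral i) S"
  shows "((\<lambda>x. f (2 *\<^sub>R z - x)) has_integral i) S"
proof -
  obtain R where "\<forall>y\<in>S. dist z y \<le> R" using assms(1) bounded_any_center[of S z] by blast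
  hence R: "S \<subseteq> cball z R" by auto
  define Q where "Q = cbox (z - R *\<^sub>R One) (z + R *\<^sub>R One)"
  have SQ: "S \<subseteq> Q"
  proof
    fix x assume "x \<in> S"
    hence "norm (x - z) \<le> R" using R by (auto simp: dist_norm norm_minus_commute)
    hence "\<bar>(x - z) \<bullet> b\<bar> \<le> R" if "b \<in> Basis" for b
      using Basis_le_norm[OF that, of "x - z"] by linarith
    thus "x \<in> Q" unfolding Q_def Qmem by (simp add: inner_diff_left)
  qed
  define g where "g x = (if x \<in> S then f x else 0)" for x
  have g: "(g has_integral i) Q" unfolding g_def[abs_def] by (subst has_integral_restrict[OF SQ]) (rule assms(3))
  have m: "2 *\<^sub>R z - x \<in> Q" if "x \<in> Q" for x
  proof -
    have "\<bar>(2 *\<^sub>R z - x) \<bullet> b - z \<bullet> b\<bar> = \<bar>x \<bullet> b - z \<bullet> b\<bar>" for b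
      by (simp add: inner_diff_left)
    thus ?thesis using that unfolding Q_def Qmem by simp
  qed
  have img0: "(\<lambda>x. 2 *\<^sub>R z - x) ` Q = Q"
  proof
    show "(\<lambda>x. 2 *\<^sub>R z - x) ` Q \<subseteq> Q" using m by auto
    show "Q \<subseteq> (\<lambda>x. 2 *\<^sub>R z - x) ` Q"
    proof
      fix x assume "x \<in> Q"
      moreover have "x = 2 *\<^sub>R z - (2 *\<^sub>R z - x)" by simp
      ultimately show "x \<in> (\<lambda>x. 2 *\<^sub>R z - x) ` Q" using m[of x] by blast
    qed
  qed
  have fe: "(\<lambda>x. (1 / (-1::real)) *\<^sub>R x + - ((1 / (-1::real)) *\<^sub>R (2 *\<^sub>R z))) = (\<lambda>x. 2 *\<^sub>R z - x)"
    by (rule ext) simp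
  have "((\<lambda>x. g ((-1) *\<^sub>R x + 2 *\<^sub>R z)) has_integral (1 / (\<bar>-1::real\<bar> ^ DIM('a))) *\<^sub>R i)
         ((\<lambda>x. (1 / (-1::real)) *\<^sub>R x + - ((1 / (-1::real)) *\<^sub>R (2 *\<^sub>R z))) ` Q)"
    unfolding Q_def by (rule has_integral_affinity[OF g[unfolded Q_def]]) simp
  hence "((\<lambda>x. g ((-1) *\<^sub>R x + 2 *\<^sub>R z)) has_integral i) Q"
    unfolding fe img0 by simp
  moreover have "g ((-1) *\<^sub>R x + 2 *\<^sub>R z) = (if x \<in> S then f (2 *\<^sub>R z - x) else 0)" for x
  proof -
    have "x \<in> S \<longleftrightarrow> 2 *\<^sub>R z - x \<in> S"
      using assms(2)[of x] assms(2)[of "2 *\<^sub>R z - x"] by auto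
    moreover have "(-1) *\<^sub>R x + 2 *\<^sub>R z = 2 *\<^sub>R z - x" by simp
    ultimately show ?thesis by (simp add: g_def)
  qed
  ultimately have "((\<lambda>x. if x \<in> S then f (2 *\<^sub>R z - x) else 0) has_integral i) Q" by simp
  thus ?thesis using has_integral_restrict[OF SQ, of "\<lambda>x. f (2 *\<^sub>R z - x)" i] by simp
qed

lemma ball_sym': fixes z x :: "'a::real_normed_vector"
  shows "dist z x < r \<Longrightarrow> dist z (2 *\<^sub>R z - x) < (r::real)"
proof -
  have e: "z - (2 *\<^sub>R z - x) = x - z" by (simp add: scaleR_2 algebra_simps)
  show "dist z x < r \<Longrightarrow> dist z (2 *\<^sub>R z - x) < (r::real)"
    unfolding dist_norm e by (simp add: norm_minus_commute)
qed

lemma ball_sym: "x \<in> ball z r \<Longrightarrow> 2 *\<^sub>R z - x \<in> ball (z::'a::euclidean_space) r"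
  using ball_sym' by auto

lemma ball_moment:
  fixes l z :: "'a::euclidean_space"
  assumes "r > 0"
  shows "integral (ball z r) (\<lambda>y. l \<bullet> y) = (l \<bullet> z) * measure lebesgue (ball z r)"
proof -
  let ?S = "ball z r"
  have int: "(\<lambda>y. l \<bullet> y) integrable_on ?S"
    by (rule integrable_cont_bounded) (auto intro: continuous_intros)
  have "((\<lambda>y. l \<bullet> (2 *\<^sub>R z - y)) has_integral integral ?S (\<lambda>y. l \<bullet> y)) ?S"
    by (rule sym_has_integral) (use int ball_sym ball_sym' in auto)
  hence "integral ?S (\<lambda>y. l \<bullet> (2 *\<^sub>R z - y)) = integral ?S (\<lambda>y. l \<bullet> y)" by blast
  moreover have "integral ?S (\<lambda>y. l \<bullet> (2 *\<^sub>R z - y)) = integral ?S (\<lambda>y. 2 * (l \<bullet> z) - l \<bullet> y)"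
    by (simp add: inner_diff_right)
  moreover have "integral ?S (\<lambda>y. 2 * (l \<bullet> z) - l \<bullet> y) = 2 * (l \<bullet> z) * measure lebesgue ?S - integral ?S (\<lambda>y. l \<bullet> y)"
  proof -
    have c1: "integral ?S (\<lambda>y. 2 * (l \<bullet> z)) = 2 * (l \<bullet> z) * measure lebesgue ?S"
      by (rule integral_const_lm) simp
    have "integral ?S (\<lambda>y. 2 * (l \<bullet> z) - l \<bullet> y) = integral ?S (\<lambda>y. 2 * (l \<bullet> z)) - integral ?S (\<lambda>y. l \<bullet> y)"
      by (rule integral_diff) (use int in \<open>auto intro: integrable_on_const\<close>)
    thus ?thesis using c1 by simp
  qed
  ultimately show ?thesis by linarith
qed

lemma half_ball:
  fixes l z :: "'a::euclidean_space"
  assumes "r > 0" "l \<noteq> 0"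
  shows "measure lebesgue (ball z r \<inter> {y. l \<bullet> y > l \<bullet> z}) = measure lebesgue (ball z r) / 2"
proof -
  let ?S = "ball z r"
  define P where "P = ball z r \<inter> {y. l \<bullet> y > l \<bullet> z}"
  define P' where "P' = ball z r \<inter> {y. l \<bullet> y < l \<bullet> z}"
  define H where "H = ball z r \<inter> {y. l \<bullet> y = l \<bullet> z}"
  have Plm: "P \<in> lmeasurable" unfolding P_def
    by (rule fmeasurableI2[of "ball z r"]) (auto intro!: fmeasurableD lmeasurable_open bounded_Int open_Int open_halfspace_gt)
  have P'lm: "P' \<in> lmeasurable" unfolding P'_def
    by (rule fmeasurableI2[of "ball z r"]) (auto intro!: fmeasurableD lmeasurable_open bounded_Int open_Int open_halfspace_lt)
  have Hneg: "negligible H" unfolding H_def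
    by (rule negligible_subset[OF negligible_hyperplane[of l "l \<bullet> z"]]) (use assms in auto)
  have "((\<lambda>_. 1::real) has_integral measure lebesgue P) P"
    using Plm by (simp add: lmeasure_integral integrable_on_const has_integral_integral[symmetric])
  hence "((\<lambda>x. if x \<in> P then 1::real else 0) has_integral measure lebesgue P) ?S"
    by (subst has_integral_restrict) (auto simp: P_def)
  hence "((\<lambda>x. if 2 *\<^sub>R z - x \<in> P then 1::real else 0) has_integral measure lebesgue P) ?S"
    by (intro sym_has_integral[where f="\<lambda>x. if x \<in> P then 1::real else 0"]) (auto intro: ball_sym ball_sym')
  moreover have "(if 2 *\<^sub>R z - x \<in> P then 1::real else 0) = (if x \<in> P' then 1 else 0)" if xS: "x \<in> ?S" for x
  proof -
    have i: "l \<bullet> (2 *\<^sub>R z - x) = 2 * (l \<bullet> z) - l \<bullet> x" by (simp add: inner_diff_right)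
    have "2 *\<^sub>R z - x \<in> P \<longleftrightarrow> x \<in> P'"
      using xS ball_sym[OF xS] unfolding P_def P'_def Int_iff mem_Collect_eq i by linarith
    thus ?thesis by simp
  qed
  ultimately have "((\<lambda>x. if x \<in> P' then 1::real else 0) has_integral measure lebesgue P) ?S"
    by (rule has_integral_eq[rotated])
  hence "((\<lambda>_. 1::real) has_integral measure lebesgue P) P'"
    by (subst (asm) has_integral_restrict) (auto simp: P'_def)
  hence "integral P' (\<lambda>_. 1::real) = measure lebesgue P" by (rule integral_unique)
  hence eq: "measure lebesgue P' = measure lebesgue P" using lmeasure_integral[OF P'lm] by simp
  have "measure lebesgue ?S = measure lebesgue P + measure lebesgue P' + measure lebesgue H"
  proof -
    have V: "P \<union> P' \<union> H = ?S" by (auto simp: P_def P'_def H_def)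
    have "P \<inter> P' = {}" by (auto simp: P_def P'_def)
    hence n1: "negligible (P \<inter> P')" by simp
    have n2: "negligible (P \<inter> H)" by (rule negligible_subset[OF Hneg]) blast
    have n3: "negligible (P' \<inter> H)" by (rule negligible_subset[OF Hneg]) blast
    show ?thesis using measure_Un3_negligible[OF Plm P'lm negligible_imp_measurable[OF Hneg] n1 n2 n3 V] by simp
  qed
  moreover have "measure lebesgue H = 0" using Hneg by (simp add: negligible_imp_measure0)
  ultimately show ?thesis using eq by (simp add: P_def)
qed


lemma shift_bound:
  fixes E :: "'a::euclidean_space set" and l z :: 'a
  assumes Elm: "E \<in> lmeasurable" and Eb: "bounded E" and E1: "measure lebesgue E = 1"
    and diam: "\<And>p q. p \<in> E \<Longrightarrow> q \<in> E \<Longrightarrow> dist p q < D"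
    and int0: "integral E (\<lambda>x. l \<bullet> x) = 0"
    and l: "norm l = 1" and r: "r > 0" and B1: "measure lebesgue (ball z r) = 1"
    and a: "measure lebesgue (E - ball z r) < 1/2"
  shows "l \<bullet> z \<le> measure lebesgue (E - ball z r) * (D + r)"
proof -
  define B where "B = ball z r"
  define a where "a = measure lebesgue (E - B)"
  define A where "A = B - E"
  define C where "C = E - B"
  define g where "g x = l \<bullet> x" for x
  have Blm: "B \<in> lmeasurable" by (simp add: B_def)
  have Bb: "bounded B" by (simp add: B_def)
  have Alm: "A \<in> lmeasurable" and Clm: "C \<in> lmeasurable" and BElm: "B \<inter> E \<in> lmeasurable"
    using Blm Elm by (auto simp: A_def C_def intro: fmeasurable.Diff fmeasurable.Int)
  have mC: "measure lebesgue C = a" by (simp add: C_def a_def)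
  have "measure lebesgue (E - (B \<inter> E)) = measure lebesgue E - measure lebesgue (B \<inter> E)"
    by (rule measurable_measure_Diff) (use Elm BElm in \<open>auto intro: fmeasurableD\<close>)
  moreover have "E - (B \<inter> E) = E - B" by blast
  ultimately have mBE: "measure lebesgue (B \<inter> E) = 1 - a" using E1 by (simp add: a_def)
  have "measure lebesgue (B - (B \<inter> E)) = measure lebesgue B - measure lebesgue (B \<inter> E)"
    by (rule measurable_measure_Diff) (use Blm BElm in \<open>auto intro: fmeasurableD\<close>)
  moreover have "B - (B \<inter> E) = A" by (auto simp: A_def)
  ultimately have mA: "measure lebesgue A = a" using mBE B1 by (simp add: B_def)
  have Ene: "E \<noteq> {}" using E1 by auto
  have cont: "continuous_on UNIV g" unfolding g_def by (intro continuous_intros)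
  have intg: "g integrable_on S" if "S \<in> lmeasurable" "bounded S" for S
    using integrable_cont_bounded[OF fmeasurableD[OF that(1)] that(2) cont] .
  have Ab: "bounded A" "bounded C" "bounded (B \<inter> E)"
    using Bb Eb by (auto simp: A_def C_def intro: bounded_subset)
  have glip: "g p - g q \<le> dist p q" for p q
  proof -
    have "g p - g q = l \<bullet> (p - q)" by (simp add: g_def inner_diff_right)
    also have "\<dots> \<le> norm l * norm (p - q)" by (rule norm_cauchy_schwarz)
    finally show ?thesis using l by (simp add: dist_norm)
  qed
  define M where "M = Sup (g ` E)"
  have bdd: "bdd_above (g ` E)"
  proof -
    obtain R where R: "\<And>x. x \<in> E \<Longrightarrow> norm x \<le> R" using Eb bounded_iff by blast
    have "g x \<le> R" if "x \<in> E" for x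
      using glip[of x 0] R[OF that] by (simp add: g_def)
    thus ?thesis by (rule bdd_aboveI2)
  qed
  have hM1: "g q \<le> M" if "q \<in> E" for q
    unfolding M_def using bdd that by (intro cSup_upper) auto
  have hM2: "M - D \<le> g q" if "q \<in> E" for q
  proof -
    have "M \<le> g q + D" unfolding M_def
    proof (rule cSup_least)
      show "g ` E \<noteq> {}" using Ene by simp
      fix y assume "y \<in> g ` E"
      then obtain p where "p \<in> E" "y = g p" by blast
      thus "y \<le> g q + D" using glip[of p q] diam[OF \<open>p \<in> E\<close> that] by simp
    qed
    thus ?thesis by simp
  qed
  have hMz: "g z \<le> M"
  proof (rule ccontr)
    assume "\<not> g z \<le> M"
    hence Mz: "M < g z" by simp
    have sub: "B \<inter> {y. l \<bullet> y > l \<bullet> z} \<subseteq> A"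
    proof
      fix y assume y: "y \<in> B \<inter> {y. l \<bullet> y > l \<bullet> z}"
      have "y \<notin> E"
      proof
        assume "y \<in> E" hence "g y \<le> M" by (rule hM1)
        with y Mz show False by (simp add: g_def)
      qed
      thus "y \<in> A" using y by (simp add: A_def)
    qed
    have "l \<noteq> 0" using l by auto
    hence "measure lebesgue (B \<inter> {y. l \<bullet> y > l \<bullet> z}) = 1/2"
      using half_ball[OF r, of l z] B1 by (simp add: B_def)
    moreover have "measure lebesgue (B \<inter> {y. l \<bullet> y > l \<bullet> z}) \<le> measure lebesgue A"
      using sub Alm by (intro measure_mono_fmeasurable)
        (auto simp: B_def intro!: fmeasurableD lmeasurable_open bounded_Int open_Int open_halfspace_gt)
    ultimately show False using mA a by (simp add: a_def B_def)
  qed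
  have iB: "integral B g = g z"
    using ball_moment[OF r, of z l] B1 by (simp add: B_def g_def[abs_def])
  have iE: "integral E g = 0" using int0 by (simp add: g_def[abs_def])
  have split1: "integral B g = integral (B \<inter> E) g + integral A g"
  proof -
    have "B = (B \<inter> E) \<union> A" by (auto simp: A_def)
    moreover have "integral ((B \<inter> E) \<union> A) g = integral (B \<inter> E) g + integral A g"
    proof (rule integral_Un)
      show "g integrable_on B \<inter> E" using intg BElm Ab by auto
      show "g integrable_on A" using intg Alm Ab by auto
      have "(B \<inter> E) \<inter> A = {}" by (auto simp: A_def)
      thus "negligible ((B \<inter> E) \<inter> A)" by simp
    qed
    ultimately show ?thesis by simp
  qed
  have split2: "integral E g = integral (B \<inter> E) g + integral C g"
  proof -
    have "E = (B \<inter> E) \<union> C" by (auto simp: C_def)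
    moreover have "integral ((B \<inter> E) \<union> C) g = integral (B \<inter> E) g + integral C g"
    proof (rule integral_Un)
      show "g integrable_on B \<inter> E" using intg BElm Ab by auto
      show "g integrable_on C" using intg Clm Ab by auto
      have "(B \<inter> E) \<inter> C = {}" by (auto simp: C_def)
      thus "negligible ((B \<inter> E) \<inter> C)" by simp
    qed
    ultimately show ?thesis by simp
  qed
  have bA: "integral A g \<le> (M + r) * a"
  proof -
    have "integral A g \<le> integral A (\<lambda>_. M + r)"
    proof (rule integral_le)
      show "g integrable_on A" using intg Alm Ab by auto
      show "(\<lambda>_. M + r) integrable_on A" using Alm by (rule integrable_on_const)
      fix y assume "y \<in> A"
      hence "dist y z < r" by (simp add: A_def B_def dist_commute)
      thus "g y \<le> M + r" using glip[of y z] hMz by linarith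
    qed
    also have "\<dots> = (M + r) * a" using integral_const_lm[OF Alm] mA by simp
    finally show ?thesis .
  qed
  have bC: "(M - D) * a \<le> integral C g"
  proof -
    have "integral C (\<lambda>_. M - D) \<le> integral C g"
    proof (rule integral_le)
      show "g integrable_on C" using intg Clm Ab by auto
      show "(\<lambda>_. M - D) integrable_on C" using Clm by (rule integrable_on_const)
      fix y assume "y \<in> C"
      thus "M - D \<le> g y" using hM2 by (simp add: C_def)
    qed
    moreover have "integral C (\<lambda>_. M - D) = (M - D) * a" using integral_const_lm[OF Clm] mC by simp
    ultimately show ?thesis by simp
  qed
  have "g z = integral A g - integral C g" using iB iE split1 split2 by linarith
  also have "\<dots> \<le> (M + r) * a - (M - D) * a" using bA bC by linarith
  also have "\<dots> = a * (D + r)" by (simp add: algebra_simps)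
  finally show ?thesis by (simp add: g_def a_def B_def)
qed


lemma cylinder_pim:
  assumes A: "finite A" "e \<notin> A" and r: "r > 0" and ab: "\<alpha> \<le> \<beta>"
  shows "emeasure (Pi\<^sub>M (insert e A) (\<lambda>_. lborel))
           ({f. \<alpha> < f e \<and> f e \<le> \<beta> \<and> sqrt (\<Sum>i\<in>A. (f i)\<^sup>2) \<le> r} \<inter> space (Pi\<^sub>M (insert e A) (\<lambda>_. lborel)))
         = ennreal ((\<beta> - \<alpha>) * (unit_ball_vol (real (card A)) * r ^ card A))"
proof -
  interpret product_sigma_finite "\<lambda>_. lborel" by standard
  let ?M = "Pi\<^sub>M (insert e A) (\<lambda>_. lborel)"
  let ?F = "{f. \<alpha> < f e \<and> f e \<le> \<beta> \<and> sqrt (\<Sum>i\<in>A. (f i)\<^sup>2) \<le> r} \<inter> space ?M"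
  let ?G = "{f. sqrt (\<Sum>i\<in>A. (f i)\<^sup>2) \<le> r} \<inter> space (Pi\<^sub>M A (\<lambda>_. lborel))"
  have "emeasure ?M ?F = nn_integral ?M (indicator ?F)"
    by (subst nn_integral_indicator) auto
  also have "\<dots> = (\<integral>\<^sup>+ y. \<integral>\<^sup>+ x. indicator ?F (x(e := y)) \<partial>Pi\<^sub>M A (\<lambda>_. lborel) \<partial>lborel)"
    using A by (subst product_nn_integral_insert_rev) auto
  also have "\<dots> = (\<integral>\<^sup>+ y. \<integral>\<^sup>+ x. indicator {\<alpha><..\<beta>} y * indicator ?G x \<partial>Pi\<^sub>M A (\<lambda>_. lborel) \<partial>lborel)"
  proof (intro nn_integral_cong, goal_cases)
    case (1 y x)
    have "(\<Sum>i\<in>A. ((x(e := y)) i)\<^sup>2) = (\<Sum>i\<in>A. (x i)\<^sup>2)"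
      using A by (intro sum.cong) auto
    thus ?case using 1
      by (auto simp: indicator_def PiE_def space_PiM extensional_def)
  qed
  also have "\<dots> = (\<integral>\<^sup>+ y. indicator {\<alpha><..\<beta>} y * emeasure (Pi\<^sub>M A (\<lambda>_. lborel)) ?G \<partial>lborel)"
    by (intro nn_integral_cong, subst nn_integral_cmult, simp, subst nn_integral_indicator) auto
  also have "\<dots> = (\<integral>\<^sup>+ y. ennreal (unit_ball_vol (real (card A)) * r ^ card A) * indicator {\<alpha><..\<beta>} y \<partial>lborel)"
    using A r by (subst emeasure_cball_aux) (auto simp: mult.commute)
  also have "\<dots> = ennreal (unit_ball_vol (real (card A)) * r ^ card A) * emeasure lborel {\<alpha><..\<beta>}"
    by (subst nn_integral_cmult) auto
  also have "\<dots> = ennreal ((\<beta> - \<alpha>) * (unit_ball_vol (real (card A)) * r ^ card A))"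
    using ab r by (simp add: ennreal_mult'[symmetric] mult.commute)
  finally show ?thesis .
qed

lemma norm_sum_Basis:
  fixes f :: "'a::euclidean_space \<Rightarrow> real"
  shows "norm (\<Sum>b\<in>Basis. f b *\<^sub>R b :: 'a) = sqrt (\<Sum>b\<in>Basis. (f b)\<^sup>2)"
proof -
  have "norm (\<Sum>b\<in>Basis. f b *\<^sub>R b :: 'a) = dist 0 (\<Sum>b\<in>Basis. f b *\<^sub>R b :: 'a)" by simp
  also have "\<dots> = sqrt (\<Sum>b\<in>Basis. (f b)\<^sup>2)"
    by (subst euclidean_dist_l2) (simp add: L2_set_def inner_sum_left inner_Basis if_distrib cong: if_cong)
  finally show ?thesis .
qed

lemma inner_sum_Basis:
  fixes f :: "'a::euclidean_space \<Rightarrow> real"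
  assumes "e \<in> Basis"
  shows "(\<Sum>b\<in>Basis. f b *\<^sub>R b :: 'a) \<bullet> e = f e"
  using assms by (simp add: inner_sum_left inner_Basis if_distrib cong: if_cong)

lemma cylinder0:
  fixes e :: "'a::euclidean_space"
  assumes e: "e \<in> Basis" and r: "r > 0" and ab: "\<alpha> \<le> \<beta>"
  shows "measure lebesgue (ball (0::'a) r \<inter> {y. \<alpha> < y \<bullet> e \<and> y \<bullet> e \<le> \<beta>})
           \<le> (\<beta> - \<alpha>) * (unit_ball_vol (real (DIM('a) - 1)) * r ^ (DIM('a) - 1))"
proof -
  let ?S = "ball (0::'a) r \<inter> {y. \<alpha> < y \<bullet> e \<and> y \<bullet> e \<le> \<beta>}"
  let ?M = "Pi\<^sub>M (Basis::'a set) (\<lambda>_. lborel)"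
  let ?A = "Basis - {e::'a}"
  let ?\<Phi> = "\<lambda>f. \<Sum>b\<in>Basis. f b *\<^sub>R b :: 'a"
  have Sb: "?S \<in> sets borel"
  proof -
    have "?S = ball 0 r \<inter> {y. e \<bullet> y > \<alpha>} \<inter> {y. e \<bullet> y \<le> \<beta>}" by (auto simp: inner_commute)
    moreover have "ball (0::'a) r \<inter> {y. e \<bullet> y > \<alpha>} \<inter> {y. e \<bullet> y \<le> \<beta>} \<in> sets borel"
      by (intro sets.Int borel_open borel_closed open_ball open_halfspace_gt closed_halfspace_le)
    ultimately show ?thesis by simp
  qed
  have ins: "insert e ?A = Basis" using e by auto
  have cardA: "card ?A = DIM('a) - 1" using e by simp
  have "emeasure lborel ?S = emeasure (distr ?M borel ?\<Phi>) ?S"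
    by (subst lborel_eq) simp
  also have "\<dots> = emeasure ?M (?\<Phi> -` ?S \<inter> space ?M)"
    using Sb by (subst emeasure_distr) auto
  also have "\<dots> \<le> emeasure ?M ({f. \<alpha> < f e \<and> f e \<le> \<beta> \<and> sqrt (\<Sum>i\<in>?A. (f i)\<^sup>2) \<le> r} \<inter> space ?M)"
  proof (rule emeasure_mono)
    show "?\<Phi> -` ?S \<inter> space ?M \<subseteq> {f. \<alpha> < f e \<and> f e \<le> \<beta> \<and> sqrt (\<Sum>i\<in>?A. (f i)\<^sup>2) \<le> r} \<inter> space ?M"
    proof (intro subsetI)
      fix f assume ff: "f \<in> ?\<Phi> -` ?S \<inter> space ?M"
      hence f: "?\<Phi> f \<in> ?S" and fs: "f \<in> space ?M" by auto
      have 1: "\<alpha> < f e" "f e \<le> \<beta>" using f inner_sum_Basis[OF e, of f] by auto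
      have "sqrt (\<Sum>b\<in>Basis. (f b)\<^sup>2) < r" using f norm_sum_Basis[of f] by simp
      moreover have "(\<Sum>i\<in>?A. (f i)\<^sup>2) \<le> (\<Sum>b\<in>Basis. (f b)\<^sup>2)"
        by (intro sum_mono2) auto
      ultimately have 2: "sqrt (\<Sum>i\<in>?A. (f i)\<^sup>2) \<le> r"
        using real_sqrt_le_mono by (meson le_less_trans less_imp_le)
      show "f \<in> {f. \<alpha> < f e \<and> f e \<le> \<beta> \<and> sqrt (\<Sum>i\<in>?A. (f i)\<^sup>2) \<le> r} \<inter> space ?M"
        using 1 2 fs by blast
    qed
    show "{f. \<alpha> < f e \<and> f e \<le> \<beta> \<and> sqrt (\<Sum>i\<in>?A. (f i)\<^sup>2) \<le> r} \<inter> space ?M \<in> sets ?M"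
      using e by measurable
  qed
  also have "\<dots> = ennreal ((\<beta> - \<alpha>) * (unit_ball_vol (real (DIM('a) - 1)) * r ^ (DIM('a) - 1)))"
    using cylinder_pim[of ?A e r \<alpha> \<beta>] r ab ins cardA by simp
  finally have le: "emeasure lborel ?S \<le> ennreal ((\<beta> - \<alpha>) * (unit_ball_vol (real (DIM('a) - 1)) * r ^ (DIM('a) - 1)))" .
  have "measure lebesgue ?S = measure lborel ?S" using Sb by simp
  also have "\<dots> \<le> (\<beta> - \<alpha>) * (unit_ball_vol (real (DIM('a) - 1)) * r ^ (DIM('a) - 1))"
    unfolding measure_def using le ab r by (intro enn2real_leI) auto
  finally show ?thesis .
qed


lemma cylinder:
  fixes e z :: "'a::euclidean_space"
  assumes e: "e \<in> Basis" and r: "r > 0" and ab: "\<alpha> \<le> \<beta>"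
  shows "measure lebesgue (ball z r \<inter> {y. \<alpha> < y \<bullet> e \<and> y \<bullet> e \<le> \<beta>})
           \<le> (\<beta> - \<alpha>) * (unit_ball_vol (real (DIM('a) - 1)) * r ^ (DIM('a) - 1))"
proof -
  let ?T = "ball 0 r \<inter> {y. \<alpha> - z \<bullet> e < y \<bullet> e \<and> y \<bullet> e \<le> \<beta> - z \<bullet> e}"
  have eq: "ball z r \<inter> {y. \<alpha> < y \<bullet> e \<and> y \<bullet> e \<le> \<beta>} = (+) z ` ?T"
  proof
    show "ball z r \<inter> {y. \<alpha> < y \<bullet> e \<and> y \<bullet> e \<le> \<beta>} \<subseteq> (+) z ` ?T"
    proof
      fix y assume y: "y \<in> ball z r \<inter> {y. \<alpha> < y \<bullet> e \<and> y \<bullet> e \<le> \<beta>}"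
      have "y - z \<in> ?T" using y by (auto simp: dist_norm inner_diff_left norm_minus_commute)
      moreover have "y = z + (y - z)" by simp
      ultimately show "y \<in> (+) z ` ?T" by blast
    qed
    show "(+) z ` ?T \<subseteq> ball z r \<inter> {y. \<alpha> < y \<bullet> e \<and> y \<bullet> e \<le> \<beta>}"
      by (auto simp: dist_norm inner_add_left)
  qed
  have "measure lebesgue (ball z r \<inter> {y. \<alpha> < y \<bullet> e \<and> y \<bullet> e \<le> \<beta>}) = measure lebesgue ?T"
    unfolding eq by (rule measure_translation)
  also have "\<dots> \<le> ((\<beta> - z \<bullet> e) - (\<alpha> - z \<bullet> e)) * (unit_ball_vol (real (DIM('a) - 1)) * r ^ (DIM('a) - 1))"
    by (rule cylinder0[OF e r]) (use ab in simp)
  finally show ?thesis by simp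
qed


lemma measure_ball_pos: "0 < r \<Longrightarrow> 0 < measure lebesgue (ball (x::'a::euclidean_space) r)"
  using content_ball_pos[of r x] by simp

lemma negligible_low_density:
  fixes E :: "'a::euclidean_space set"
  assumes E: "E \<in> lmeasurable" and \<beta>: "0 < \<beta>" "\<beta> \<le> 1"
  shows "negligible {x\<in>E. \<forall>d>0. \<exists>\<rho>. 0 < \<rho> \<and> \<rho> < d \<and>
            measure lebesgue (E \<inter> ball x \<rho>) < (1 - \<beta>) * measure lebesgue (ball x \<rho>)}"
    (is "negligible ?S")
proof (subst negligible_outer_le, intro allI impI)
  fix e :: real assume e: "e > 0"
  obtain U where U: "open U" "E \<subseteq> U" "(U - E) \<in> lmeasurable" "emeasure lebesgue (U - E) < ennreal (e*\<beta>)"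
    using sets_lebesgue_outer_open[of E "e*\<beta>"] E e \<beta> by (auto simp: fmeasurable_def)
  have UE: "measure lebesgue (U - E) < e * \<beta>"
    using U(3,4) by (simp add: emeasure_eq_measure2 ennreal_less_iff)
  have Ulm: "U \<in> lmeasurable"
  proof -
    have "U = E \<union> (U - E)" using U by auto
    thus ?thesis using E U(3) by (metis fmeasurable.Un)
  qed
  define K where "K = {(x,\<rho>). x \<in> ?S \<and> 0 < \<rho> \<and> ball x \<rho> \<subseteq> U \<and>
      measure lebesgue (E \<inter> ball x \<rho>) < (1 - \<beta>) * measure lebesgue (ball x \<rho>)}"
  have cov: "\<exists>i. i \<in> K \<and> x \<in> ball (fst i) (snd i) \<and> snd i < d" if xS: "x \<in> ?S" and d0: "0 < d" for x d
  proof -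
    obtain \<delta> where \<delta>: "\<delta> > 0" "ball x \<delta> \<subseteq> U"
      using U(1,2) xS open_contains_ball by blast
    obtain \<rho> where \<rho>: "0 < \<rho>" "\<rho> < min d \<delta>"
      "measure lebesgue (E \<inter> ball x \<rho>) < (1 - \<beta>) * measure lebesgue (ball x \<rho>)"
    proof -
      have "0 < min d \<delta>" using d0 \<delta> by simp
      moreover have "\<forall>d>0. \<exists>\<rho>. 0 < \<rho> \<and> \<rho> < d \<and>
            measure lebesgue (E \<inter> ball x \<rho>) < (1 - \<beta>) * measure lebesgue (ball x \<rho>)"
        using xS by blast
      ultimately obtain \<rho> where "0 < \<rho> \<and> \<rho> < min d \<delta> \<and>
            measure lebesgue (E \<inter> ball x \<rho>) < (1 - \<beta>) * measure lebesgue (ball x \<rho>)"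
        by blast
      thus ?thesis using that by blast
    qed
    have "ball x \<rho> \<subseteq> ball x \<delta>" using \<rho> by (intro subset_ball) simp
    hence "ball x \<rho> \<subseteq> U" using \<delta> by blast
    hence "(x,\<rho>) \<in> K" using \<rho> xS by (auto simp: K_def)
    thus ?thesis using \<rho> by (intro exI[of _ "(x,\<rho>)"]) auto
  qed
  obtain C where C: "countable C" "C \<subseteq> K"
     "pairwise (\<lambda>i j. disjnt (ball (fst i) (snd i)) (ball (fst j) (snd j))) C"
     "negligible (?S - (\<Union>i \<in> C. ball (fst i) (snd i)))"
    by (rule Vitali_covering_theorem_balls[of ?S K fst snd, OF cov]) blast+
  define T where "T = (\<Union>i \<in> C. ball (fst i) (snd i))"
  have TU: "T \<subseteq> U" unfolding T_def
  proof (rule UN_least)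
    fix i assume "i \<in> C" hence "i \<in> K" using C(2) by blast
    thus "ball (fst i) (snd i) \<subseteq> U" by (cases i) (simp add: K_def)
  qed
  have Tlm: "T \<in> lmeasurable"
    by (rule fmeasurableI2[OF Ulm TU]) (unfold T_def, use C(1) in \<open>intro sets.countable_UN', auto\<close>)
  have disj: "disjoint_family_on (\<lambda>i. ball (fst i) (snd i)) C"
    using C(3) unfolding disjoint_family_on_def pairwise_def disjnt_def by metis
  have disj2: "disjoint_family_on (\<lambda>i. E \<inter> ball (fst i) (snd i)) C"
    using disj unfolding disjoint_family_on_def by blast
  have "emeasure lebesgue (E \<inter> T) = (\<integral>\<^sup>+i. emeasure lebesgue (E \<inter> ball (fst i) (snd i)) \<partial>count_space C)"
    unfolding T_def Int_UN_distrib
    by (rule emeasure_UN_countable) (use E C disj2 in auto)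
  also have "\<dots> \<le> (\<integral>\<^sup>+i. ennreal (1 - \<beta>) * emeasure lebesgue (ball (fst i) (snd i)) \<partial>count_space C)"
  proof (rule nn_integral_mono)
    fix i assume "i \<in> space (count_space C)"
    hence iK: "i \<in> K" using C(2) by auto
    have "emeasure lebesgue (E \<inter> ball (fst i) (snd i)) = ennreal (measure lebesgue (E \<inter> ball (fst i) (snd i)))"
      using E by (intro emeasure_eq_measure2) (auto intro: fmeasurable.Int)
    also have "\<dots> \<le> ennreal ((1 - \<beta>) * measure lebesgue (ball (fst i) (snd i)))"
      using iK by (intro ennreal_leI) (auto simp: K_def)
    also have "\<dots> = ennreal (1 - \<beta>) * emeasure lebesgue (ball (fst i) (snd i))"
      using \<beta> by (simp add: ennreal_mult emeasure_eq_measure2)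
    finally show "emeasure lebesgue (E \<inter> ball (fst i) (snd i)) \<le> ennreal (1 - \<beta>) * emeasure lebesgue (ball (fst i) (snd i))" .
  qed
  also have "\<dots> = ennreal (1 - \<beta>) * (\<integral>\<^sup>+i. emeasure lebesgue (ball (fst i) (snd i)) \<partial>count_space C)"
    by (rule nn_integral_cmult) simp
  also have "(\<integral>\<^sup>+i. emeasure lebesgue (ball (fst i) (snd i)) \<partial>count_space C) = emeasure lebesgue T"
    unfolding T_def by (rule emeasure_UN_countable[symmetric]) (use C disj in auto)
  finally have "emeasure lebesgue (E \<inter> T) \<le> ennreal (1 - \<beta>) * emeasure lebesgue T" .
  hence ET: "measure lebesgue (E \<inter> T) \<le> (1 - \<beta>) * measure lebesgue T"
    using Tlm E \<beta>
    by (simp add: emeasure_eq_measure2 fmeasurable.Int ennreal_mult[symmetric] ennreal_le_iff)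
  have "measure lebesgue (T - E) = measure lebesgue T - measure lebesgue (E \<inter> T)"
  proof -
    have "T - E = T - (E \<inter> T)" by blast
    moreover have "measure lebesgue (T - (E \<inter> T)) = measure lebesgue T - measure lebesgue (E \<inter> T)"
      by (rule measurable_measure_Diff) (use Tlm E in \<open>auto intro: fmeasurableD\<close>)
    ultimately show ?thesis by simp
  qed
  moreover have "measure lebesgue (T - E) \<le> measure lebesgue (U - E)"
    using TU U(3) Tlm E by (intro measure_mono_fmeasurable) (auto intro: fmeasurableD fmeasurable.Diff)
  moreover have "(1 - \<beta>) * measure lebesgue T = measure lebesgue T - \<beta> * measure lebesgue T"
    by (simp add: algebra_simps)
  ultimately have "\<beta> * measure lebesgue T < e * \<beta>" using ET UE by linarith
  hence Te: "measure lebesgue T \<le> e" using \<beta> by (simp add: mult.commute)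
  have neg: "negligible (?S - T)" using C(4) by (simp add: T_def)
  show "\<exists>T'. ?S \<subseteq> T' \<and> T' \<in> lmeasurable \<and> measure lebesgue T' \<le> e"
  proof (intro exI conjI)
    show "?S \<subseteq> (?S - T) \<union> T" by auto
    show "(?S - T) \<union> T \<in> lmeasurable" by (rule fmeasurable.Un[OF negligible_imp_measurable[OF neg] Tlm])
    have "measure lebesgue ((?S - T) \<union> T) \<le> measure lebesgue (?S - T) + measure lebesgue T"
      using neg Tlm by (intro measure_Un_le) (auto intro: fmeasurableD negligible_imp_measurable)
    also have "measure lebesgue (?S - T) = 0" using neg by (simp add: negligible_imp_measure0)
    finally show "measure lebesgue ((?S - T) \<union> T) \<le> e" using Te by linarith
  qed
qed


lemma density_thm:
  fixes E :: "'a::euclidean_space set"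
  assumes E: "E \<in> lmeasurable"
  shows "negligible {x\<in>E. \<not> ((\<lambda>r. measure lebesgue (E \<inter> ball x r) / measure lebesgue (ball x r)) \<longlongrightarrow> 1) (at_right 0)}"
proof -
  define S where "S n = {x\<in>E. \<forall>d>0. \<exists>\<rho>. 0 < \<rho> \<and> \<rho> < d \<and>
            measure lebesgue (E \<inter> ball x \<rho>) < (1 - 1 / real (Suc n)) * measure lebesgue (ball x \<rho>)}" for n
  have "negligible (\<Union>(range S))"
  proof (rule negligible_countable_Union)
    show "countable (range S)" by simp
    fix T assume "T \<in> range S"
    then obtain n where "T = S n" by blast
    have "negligible (S n)" unfolding S_def
      by (rule negligible_low_density[OF E]) (auto simp: field_simps)
    thus "negligible T" using \<open>T = S n\<close> by simp
  qed
  moreover have "{x\<in>E. \<not> ((\<lambda>r. measure lebesgue (E \<inter> ball x r) / measure lebesgue (ball x r)) \<longlongrightarrow> 1) (at_right 0)}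
      \<subseteq> \<Union>(range S)"
  proof
    fix x assume x: "x \<in> {x\<in>E. \<not> ((\<lambda>r. measure lebesgue (E \<inter> ball x r) / measure lebesgue (ball x r)) \<longlongrightarrow> 1) (at_right 0)}"
    show "x \<in> \<Union>(range S)"
    proof (rule ccontr)
      assume "x \<notin> \<Union>(range S)"
      hence H: "\<exists>d>0. \<forall>\<rho>. 0 < \<rho> \<and> \<rho> < d \<longrightarrow>
            (1 - 1 / real (Suc n)) * measure lebesgue (ball x \<rho>) \<le> measure lebesgue (E \<inter> ball x \<rho>)" for n
      proof -
        have "x \<notin> S n" using \<open>x \<notin> \<Union>(range S)\<close> by blast
        then obtain d where d: "d > 0" "\<forall>\<rho>. \<not> (0 < \<rho> \<and> \<rho> < d \<and>
            measure lebesgue (E \<inter> ball x \<rho>) < (1 - 1 / real (Suc n)) * measure lebesgue (ball x \<rho>))"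
          using x unfolding S_def by blast
        show ?thesis
        proof (intro exI[of _ d] conjI allI impI)
          show "d > 0" by fact
          fix \<rho> :: real assume \<rho>: "0 < \<rho> \<and> \<rho> < d"
          have "\<not> (measure lebesgue (E \<inter> ball x \<rho>) < (1 - 1 / real (Suc n)) * measure lebesgue (ball x \<rho>))"
            using d(2) \<rho> by blast
          thus "(1 - 1 / real (Suc n)) * measure lebesgue (ball x \<rho>) \<le> measure lebesgue (E \<inter> ball x \<rho>)"
            by (simp only: not_less)
        qed
      qed
      have "((\<lambda>r. measure lebesgue (E \<inter> ball x r) / measure lebesgue (ball x r)) \<longlongrightarrow> 1) (at_right 0)"
      proof (rule tendstoI)
        fix \<epsilon> :: real assume \<epsilon>: "\<epsilon> > 0"
        obtain n where n: "inverse (real (Suc n)) < \<epsilon>" using reals_Archimedean[OF \<epsilon>] by blast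
        obtain d where d: "d > 0" "\<And>\<rho>. 0 < \<rho> \<Longrightarrow> \<rho> < d \<Longrightarrow>
            (1 - 1 / real (Suc n)) * measure lebesgue (ball x \<rho>) \<le> measure lebesgue (E \<inter> ball x \<rho>)"
          using H[of n] by blast
        show "\<forall>\<^sub>F r in at_right 0. dist (measure lebesgue (E \<inter> ball x r) / measure lebesgue (ball x r)) 1 < \<epsilon>"
          unfolding eventually_at_right_field
        proof (intro exI[of _ d] conjI allI impI)
          show "0 < d" by fact
          fix \<rho> :: real assume \<rho>: "0 < \<rho>" "\<rho> < d"
          have bp: "0 < measure lebesgue (ball x \<rho>)" using measure_ball_pos[OF \<rho>(1)] .
          have le1: "measure lebesgue (E \<inter> ball x \<rho>) \<le> measure lebesgue (ball x \<rho>)"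
            using E by (intro measure_mono_fmeasurable) (auto intro: fmeasurableD)
          have lo: "(1 - 1 / real (Suc n)) * measure lebesgue (ball x \<rho>) \<le> measure lebesgue (E \<inter> ball x \<rho>)"
            using d(2)[OF \<rho>] .
          have "measure lebesgue (E \<inter> ball x \<rho>) / measure lebesgue (ball x \<rho>) \<le> 1"
            using le1 bp by simp
          moreover have "1 - 1 / real (Suc n) \<le> measure lebesgue (E \<inter> ball x \<rho>) / measure lebesgue (ball x \<rho>)"
            using lo bp by (simp add: pos_le_divide_eq)
          ultimately show "dist (measure lebesgue (E \<inter> ball x \<rho>) / measure lebesgue (ball x \<rho>)) 1 < \<epsilon>"
            using n by (simp add: dist_real_def inverse_eq_divide abs_if)
        qed
      qed
      thus False using x by simp
    qed
  qed
  ultimately show ?thesis by (rule negligible_subset)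
qed


theorem lemma2p2:
  fixes E :: "(real^('n::{finite,linorder})) set"
    and k :: nat and D CF :: real and i1 :: "'n::{finite,linorder}"
  assumes N2: "CARD('n) \<ge> 2"
    and k: "1 \<le> k" "k \<le> CARD('n)"
    and D: "D > 0"
    and CF: "\<forall>F::(real^('n::{finite,linorder})) set. finite_perimeter F \<and> emeasure lebesgue F < \<infinity>
               \<and> 0 < measure lebesgue F \<longrightarrow> fraenkel F \<le> CF * sqrt (deficit F)"
    and Efp: "finite_perimeter E"
    and Evol: "measure lebesgue E = 1"
    and Ebar: "barycenter E = 0"
    and Ediam: "mt_diam E < ereal D"
    and Esym: "\<forall>i. CARD('n) - k + 1 < coord_pos i \<longrightarrow> reflect_coord i ` E = E"
    and i1: "coord_pos i1 = 1"
  shows "\<bar>1/2 - measure lebesgue (E \<inter> {x. x $ i1 > 0})\<bar>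
           \<le> CF * (unit_ball_vol (real CARD('n) - 1)
                      / unit_ball_vol (real CARD('n)) powr ((real CARD('n) - 1) / real CARD('n))
                    + unit_ball_vol (real CARD('n)) powr (1 / real CARD('n)) / 2)
             * D * sqrt (deficit E)"
proof -
  define N where "N = CARD('n)"
  define \<omega> where "\<omega> = unit_ball_vol (real N)"
  define r where "r = (1 / \<omega>) powr (1 / real N)"
  define c where "c = unit_ball_vol (real N - 1) * r ^ (N - 1)"
  define K where "K = (c + 1 / (2 * r)) * D"
  define e1 :: "real^('n::{finite,linorder})" where "e1 = axis i1 1"
  define H :: "(real^('n::{finite,linorder})) set" where "H = {x. 0 < e1 \<bullet> x}"
  define \<epsilon> where "\<epsilon> = \<bar>1/2 - measure lebesgue (E \<inter> H)\<bar>"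
  have He: "{x::real^('n::{finite,linorder}). x $ i1 > 0} = H" by (simp add: H_def e1_def inner_axis')
  have N2': "N \<ge> 2" using N2 by (simp add: N_def)
  have \<omega>pos: "\<omega> > 0" by (simp add: \<omega>_def)
  have rpos: "r > 0" using \<omega>pos by (simp add: r_def)
  have rN: "r ^ N = 1 / \<omega>"
  proof -
    have "r ^ N = r powr (real N)" using rpos by (simp add: powr_realpow)
    also have "\<dots> = (1/\<omega>) powr (1 / real N * real N)" by (simp add: r_def powr_powr)
    also have "\<dots> = 1/\<omega>" using N2' \<omega>pos by simp
    finally show ?thesis .
  qed
  have cnn: "c \<ge> 0" using N2' rpos by (simp add: c_def)
  have Kpos: "K > 0" using cnn rpos D by (simp add: K_def add_nonneg_pos)
  have e1B: "e1 \<in> Basis" by (simp add: e1_def)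
  have ne1: "norm e1 = 1" "norm (- e1) = 1" by (simp_all add: e1_def)
  have ballm: "measure lebesgue (ball z r) = 1" for z :: "real^('n::{finite,linorder})"
  proof -
    have "measure lebesgue (ball z r) = unit_ball_vol (real DIM(real^('n::{finite,linorder}))) * r ^ DIM(real^('n::{finite,linorder}))"
      using content_ball[of r z] rpos by simp
    thus ?thesis using rN \<omega>pos unfolding N_def \<omega>_def by simp
  qed
  have Elm: "E \<in> lmeasurable"
  proof (rule fmeasurableI)
    show "E \<in> sets lebesgue" using Efp by (simp add: finite_perimeter_def)
    show "emeasure lebesgue E < \<infinity>"
    proof (rule ccontr)
      assume "\<not> emeasure lebesgue E < \<infinity>"
      hence "emeasure lebesgue E = \<infinity>" by (simp add: less_top[symmetric])
      hence "measure lebesgue E = 0" by (simp add: measure_def)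
      thus False using Evol by simp
    qed
  qed
  define Z where "Z = {x\<in>E. \<not> lebesgue_point E x}"
  have Zneg: "negligible Z" using density_thm[OF Elm] by (simp add: Z_def lebesgue_point_def)
  define E' where "E' = E - Z"
  have E'lm: "E' \<in> lmeasurable"
    unfolding E'_def using Elm negligible_imp_measurable[OF Zneg] by (rule fmeasurable.Diff)
  have E'E: "negligible (E - E' \<union> (E' - E))"
    by (rule negligible_subset[OF Zneg]) (auto simp: E'_def Z_def)
  have E'm: "measure lebesgue E' = 1" using measure_negligible_symdiff[OF Elm E'E] Evol by simp
  have E'dist: "dist p q < D" if "p \<in> E'" "q \<in> E'" for p q
  proof -
    have "(p, q) \<in> {(x,y). lebesgue_point E x \<and> lebesgue_point E y}"
      using that by (simp add: E'_def Z_def)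
    hence "ereal (dist p q) \<le> mt_diam E"
      unfolding mt_diam_def by (metis (mono_tags, lifting) SUP_upper fst_conv snd_conv)
    hence "ereal (dist p q) < ereal D" using Ediam by (rule le_less_trans)
    thus ?thesis by simp
  qed
  have E'ne: "E' \<noteq> {}" using E'm by auto
  then obtain p0 where p0: "p0 \<in> E'" by blast
  have E'sub: "E' \<subseteq> cball p0 D" using E'dist[OF p0] by (auto simp: less_imp_le)
  have E'b: "bounded E'" using E'sub bounded_cball bounded_subset by blast
  have Dr: "r \<le> D"
  proof -
    have "1 \<le> measure lebesgue (cball p0 D)"
      using E'm E'sub by (metis measure_mono_fmeasurable fmeasurableD E'lm lmeasurable_cball)
    also have "\<dots> = \<omega> * D ^ N"
      using content_cball[of D p0] D by (simp add: \<omega>_def N_def)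
    finally have "1 / \<omega> \<le> D ^ N" using \<omega>pos by (simp add: field_simps)
    hence "r ^ N \<le> D ^ N" using rN by simp
    thus ?thesis using D N2' by (metis power_le_imp_le_base Suc_pred less_le_trans zero_less_numeral less_imp_le pos2)
  qed
  have intE: "integral E (\<lambda>x. x) = 0"
    using Ebar Evol by (simp add: barycenter_def)
  have intE': "integral E' (\<lambda>x. x) = 0"
  proof -
    have "integral E' (\<lambda>x. x) = integral E (\<lambda>x. x)"
      by (rule integral_spike_set) (auto intro: negligible_subset[OF Zneg] simp: E'_def)
    thus ?thesis using intE by simp
  qed
  have idint: "(\<lambda>x. x) integrable_on E'"
    by (rule integrable_cont_bounded) (use E'lm E'b in \<open>auto intro: fmeasurableD continuous_on_id\<close>)
  have int0: "integral E' (\<lambda>x. l \<bullet> x) = 0" for l :: "real^('n::{finite,linorder})"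
  proof -
    have "integral E' ((\<lambda>v. l \<bullet> v) \<circ> (\<lambda>x. x)) = l \<bullet> integral E' (\<lambda>x. x)"
      by (rule integral_linear[OF idint]) (rule bounded_linear_inner_right)
    thus ?thesis using intE' by (simp add: o_def)
  qed
  have Hlm: "S \<inter> H \<in> lmeasurable" if "S \<in> lmeasurable" for S
  proof -
    have "H \<in> sets lebesgue" unfolding H_def
      by (intro sets_completionI_sets) (auto intro!: borel_open open_halfspace_gt)
    thus ?thesis using that by (intro fmeasurable_Int_fmeasurable)
  qed
  have HE: "measure lebesgue (E \<inter> H) = measure lebesgue (E' \<inter> H)"
    by (rule measure_negligible_symdiff[OF Hlm[OF E'lm]])
       (rule negligible_subset[OF Zneg], auto simp: E'_def Z_def)
  have key: "\<epsilon> \<le> K * measure lebesgue ((E - ball z r) \<union> (ball z r - E))" for z :: "real^('n::{finite,linorder})"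
  proof -
    define B where "B = ball z r"
    define a where "a = measure lebesgue (E' - B)"
    have Blm: "B \<in> lmeasurable" by (simp add: B_def)
    have mB: "measure lebesgue B = 1" by (simp add: B_def ballm)
    have lm1: "E' - B \<in> lmeasurable" "B - E' \<in> lmeasurable" "B \<inter> E' \<in> lmeasurable"
      using E'lm Blm by (auto intro: fmeasurable.Diff fmeasurable.Int)
    have "measure lebesgue (E' - (B \<inter> E')) = measure lebesgue E' - measure lebesgue (B \<inter> E')"
      by (rule measurable_measure_Diff) (use E'lm lm1 in \<open>auto intro: fmeasurableD\<close>)
    moreover have "E' - (B \<inter> E') = E' - B" by blast
    ultimately have mBE: "measure lebesgue (B \<inter> E') = 1 - a" using E'm by (simp add: a_def)
    have "measure lebesgue (B - (B \<inter> E')) = measure lebesgue B - measure lebesgue (B \<inter> E')"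
      by (rule measurable_measure_Diff) (use Blm lm1 in \<open>auto intro: fmeasurableD\<close>)
    moreover have "B - (B \<inter> E') = B - E'" by blast
    ultimately have mBmE: "measure lebesgue (B - E') = a" using mBE mB by simp
    have a0: "a \<ge> 0" by (simp add: a_def)
    have sd: "measure lebesgue ((E - B) \<union> (B - E)) = 2 * a"
    proof -
      have "measure lebesgue ((E - B) \<union> (B - E)) = measure lebesgue ((E' - B) \<union> (B - E'))"
      proof (rule measure_negligible_symdiff)
        show "(E' - B) \<union> (B - E') \<in> lmeasurable" using lm1 by (intro fmeasurable.Un)
        show "negligible ((E' - B) \<union> (B - E') - ((E - B) \<union> (B - E)) \<union> ((E - B) \<union> (B - E) - ((E' - B) \<union> (B - E'))))"
          by (rule negligible_subset[OF Zneg]) (auto simp: E'_def Z_def)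
      qed
      also have "\<dots> = measure lebesgue (E' - B) + measure lebesgue (B - E')"
      proof -
        have "(E' - B) \<inter> (B - E') = {}" by blast
        thus ?thesis using measure_Un3[OF lm1(1) lm1(2)] by simp
      qed
      finally show ?thesis using mBmE by (simp add: a_def)
    qed
    have "measure lebesgue (E' \<inter> H) \<le> measure lebesgue E'"
      by (rule measure_mono_fmeasurable) (use E'lm Hlm[OF E'lm] in \<open>auto intro: fmeasurableD\<close>)
    hence E'H: "0 \<le> measure lebesgue (E' \<inter> H)" "measure lebesgue (E' \<inter> H) \<le> 1"
      using E'm by auto
    have eps: "\<epsilon> = \<bar>1/2 - measure lebesgue (E' \<inter> H)\<bar>" by (simp add: \<epsilon>_def HE)
    show ?thesis
    proof (cases "a \<ge> 1/2")
      case True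
      have "\<epsilon> \<le> 1/2" using eps E'H by linarith
      also have "\<dots> \<le> a * (D / r)"
      proof -
        have "1 \<le> D / r" using Dr rpos by simp
        hence "a * 1 \<le> a * (D / r)" using a0 by (intro mult_left_mono) auto
        thus ?thesis using True by linarith
      qed
      also have "\<dots> \<le> K * (2 * a)"
      proof -
        have "K * (2 * a) = 2 * a * c * D + a * (D / r)" using rpos by (simp add: K_def field_simps)
        moreover have "0 \<le> 2 * a * c * D" using a0 cnn D by simp
        ultimately show ?thesis by linarith
      qed
      finally show ?thesis using sd by (simp add: B_def)
    next
      case False
      hence a2: "a < 1/2" by simp
      have s1: "e1 \<bullet> z \<le> a * (D + r)"
        using shift_bound[OF E'lm E'b E'm E'dist int0 ne1(1) rpos ballm] a2 by (simp add: a_def B_def)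
      have s2: "(- e1) \<bullet> z \<le> a * (D + r)"
        using shift_bound[OF E'lm E'b E'm E'dist int0 ne1(2) rpos ballm] a2 by (simp add: a_def B_def)
      define z1 where "z1 = e1 \<bullet> z"
      have z1b: "\<bar>z1\<bar> \<le> a * (D + r)" using s1 s2 by (simp add: z1_def)
      define P where "P = B \<inter> {y. e1 \<bullet> y > e1 \<bullet> z}"
      have slm: "B \<inter> {y. \<alpha> < y \<bullet> e1 \<and> y \<bullet> e1 \<le> \<beta>} \<in> lmeasurable" for \<alpha> \<beta>
      proof -
        have "{y::real^('n::{finite,linorder}). \<alpha> < y \<bullet> e1 \<and> y \<bullet> e1 \<le> \<beta>} = {y. e1 \<bullet> y > \<alpha>} \<inter> {y. e1 \<bullet> y \<le> \<beta>}"
          by (auto simp: inner_commute)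
        moreover have "{y::real^('n::{finite,linorder}). e1 \<bullet> y > \<alpha>} \<inter> {y. e1 \<bullet> y \<le> \<beta>} \<in> sets lebesgue"
          by (intro sets_completionI_sets) (auto intro!: sets.Int borel_open borel_closed open_halfspace_gt closed_halfspace_le)
        ultimately show ?thesis using Blm by (auto intro: fmeasurable_Int_fmeasurable)
      qed
      have Plm: "P \<in> lmeasurable"
      proof -
        have "{y::real^('n::{finite,linorder}). e1 \<bullet> y > e1 \<bullet> z} \<in> sets lebesgue"
          by (intro sets_completionI_sets) (auto intro!: borel_open open_halfspace_gt)
        thus ?thesis using Blm unfolding P_def by (intro fmeasurable_Int_fmeasurable)
      qed
      have BHlm: "B \<inter> H \<in> lmeasurable" using Hlm[OF Blm] .
      have mP: "measure lebesgue P = 1/2"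
      proof -
        have "e1 \<noteq> 0" using ne1(1) by auto
        thus ?thesis using half_ball[OF rpos \<open>e1 \<noteq> 0\<close>, of z] mB by (simp add: P_def B_def)
      qed
      have cyl: "measure lebesgue (B \<inter> {y. \<alpha> < y \<bullet> e1 \<and> y \<bullet> e1 \<le> \<beta>}) \<le> (\<beta> - \<alpha>) * c" if "\<alpha> \<le> \<beta>" for \<alpha> \<beta>
      proof -
        have "measure lebesgue (B \<inter> {y. \<alpha> < y \<bullet> e1 \<and> y \<bullet> e1 \<le> \<beta>})
              \<le> (\<beta> - \<alpha>) * (unit_ball_vol (real (DIM(real^('n::{finite,linorder})) - 1)) * r ^ (DIM(real^('n::{finite,linorder})) - 1))"
          unfolding B_def by (rule cylinder[OF e1B rpos that])
        moreover have "real (DIM(real^('n::{finite,linorder})) - 1) = real N - 1" using N2' by (simp add: N_def)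
        ultimately show ?thesis by (simp add: c_def N_def)
      qed
      have ballH: "\<bar>measure lebesgue (B \<inter> H) - 1/2\<bar> \<le> c * \<bar>z1\<bar>"
      proof (cases "z1 \<ge> 0")
        case True
        have "measure lebesgue P \<le> measure lebesgue (B \<inter> H)"
          by (rule measure_mono_fmeasurable) (use True BHlm Plm in \<open>auto simp: P_def H_def z1_def intro: fmeasurableD\<close>)
        moreover have "measure lebesgue (B \<inter> H) \<le> measure lebesgue (P \<union> (B \<inter> {y. 0 < y \<bullet> e1 \<and> y \<bullet> e1 \<le> z1}))"
          by (rule measure_mono_fmeasurable)
             (use BHlm Plm slm in \<open>auto simp: P_def H_def z1_def inner_commute intro: fmeasurableD fmeasurable.Un\<close>)
        moreover have "measure lebesgue (P \<union> (B \<inter> {y. 0 < y \<bullet> e1 \<and> y \<bullet> e1 \<le> z1}))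
              \<le> measure lebesgue P + measure lebesgue (B \<inter> {y. 0 < y \<bullet> e1 \<and> y \<bullet> e1 \<le> z1})"
          by (rule measure_Un_le) (use Plm slm in \<open>auto intro: fmeasurableD\<close>)
        moreover have "measure lebesgue (B \<inter> {y. 0 < y \<bullet> e1 \<and> y \<bullet> e1 \<le> z1}) \<le> (z1 - 0) * c"
          using cyl[of 0 z1] True by simp
        ultimately show ?thesis using mP True by (simp add: abs_le_iff mult.commute)
      next
        case False
        have "measure lebesgue (B \<inter> H) \<le> measure lebesgue P"
          by (rule measure_mono_fmeasurable) (use False BHlm Plm in \<open>auto simp: P_def H_def z1_def intro: fmeasurableD\<close>)
        moreover have "measure lebesgue P \<le> measure lebesgue ((B \<inter> H) \<union> (B \<inter> {y. z1 < y \<bullet> e1 \<and> y \<bullet> e1 \<le> 0}))"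
          by (rule measure_mono_fmeasurable)
             (use BHlm Plm slm in \<open>auto simp: P_def H_def z1_def inner_commute intro: fmeasurableD fmeasurable.Un\<close>)
        moreover have "measure lebesgue ((B \<inter> H) \<union> (B \<inter> {y. z1 < y \<bullet> e1 \<and> y \<bullet> e1 \<le> 0}))
              \<le> measure lebesgue (B \<inter> H) + measure lebesgue (B \<inter> {y. z1 < y \<bullet> e1 \<and> y \<bullet> e1 \<le> 0})"
          by (rule measure_Un_le) (use BHlm slm in \<open>auto intro: fmeasurableD\<close>)
        moreover have "measure lebesgue (B \<inter> {y. z1 < y \<bullet> e1 \<and> y \<bullet> e1 \<le> 0}) \<le> (0 - z1) * c"
          using cyl[of z1 0] False by simp
        ultimately show ?thesis using mP False by (simp add: abs_le_iff mult.commute)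
      qed
      have EH: "\<bar>measure lebesgue (E' \<inter> H) - measure lebesgue (B \<inter> H)\<bar> \<le> a"
      proof -
        have "measure lebesgue (E' \<inter> H) \<le> measure lebesgue ((B \<inter> H) \<union> (E' - B))"
          by (rule measure_mono_fmeasurable) (use BHlm lm1 Hlm[OF E'lm] in \<open>auto intro: fmeasurableD fmeasurable.Un\<close>)
        also have "\<dots> \<le> measure lebesgue (B \<inter> H) + measure lebesgue (E' - B)"
          by (rule measure_Un_le) (use BHlm lm1 in \<open>auto intro: fmeasurableD\<close>)
        finally have 1: "measure lebesgue (E' \<inter> H) \<le> measure lebesgue (B \<inter> H) + a" by (simp add: a_def)
        have "measure lebesgue (B \<inter> H) \<le> measure lebesgue ((E' \<inter> H) \<union> (B - E'))"
          by (rule measure_mono_fmeasurable) (use BHlm lm1 Hlm[OF E'lm] in \<open>auto intro: fmeasurableD fmeasurable.Un\<close>)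
        also have "\<dots> \<le> measure lebesgue (E' \<inter> H) + measure lebesgue (B - E')"
          by (rule measure_Un_le) (use Hlm[OF E'lm] lm1 in \<open>auto intro: fmeasurableD\<close>)
        finally have 2: "measure lebesgue (B \<inter> H) \<le> measure lebesgue (E' \<inter> H) + a" using mBmE by simp
        show ?thesis using 1 2 by linarith
      qed
      have "\<epsilon> \<le> a + c * \<bar>z1\<bar>" using eps ballH EH by linarith
      also have "\<dots> \<le> a + c * (a * (D + r))" using z1b cnn by (simp add: mult_left_mono)
      also have "\<dots> \<le> K * (2 * a)"
      proof -
        have "K * (2 * a) = 2 * a * c * D + a * (D / r)" using rpos by (simp add: K_def field_simps)
        moreover have "c * a * r \<le> c * a * D" using Dr cnn a0 by (simp add: mult_left_mono)
        moreover have "a * 1 \<le> a * (D / r)" using Dr rpos a0 by (intro mult_left_mono) auto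
        moreover have "c * (a * (D + r)) = c * a * D + c * a * r" by (simp add: algebra_simps)
        ultimately show ?thesis by (simp add: algebra_simps)
      qed
      finally show ?thesis using sd by (simp add: B_def)
    qed
  qed
  have vb: "vol_ball 1 = (ball 0 r :: (real^('n::{finite,linorder})) set)"
    by (simp add: vol_ball_def r_def \<omega>_def N_def)
  have frk: "fraenkel E = (INF x. measure lebesgue ((E - ball x r) \<union> (ball x r - E)))"
    by (simp add: fraenkel_def Evol vb)
  have "\<epsilon> / K \<le> fraenkel E"
    unfolding frk
  proof (rule cINF_greatest)
    show "UNIV \<noteq> {}" by simp
    fix x :: "real^('n::{finite,linorder})"
    show "\<epsilon> / K \<le> measure lebesgue ((E - ball x r) \<union> (ball x r - E))"
      using key[of x] Kpos by (simp add: divide_le_eq mult.commute)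
  qed
  hence epsK: "\<epsilon> \<le> K * fraenkel E" using Kpos by (simp add: divide_le_eq mult.commute)
  have "fraenkel E \<le> CF * sqrt (deficit E)"
    using CF Efp Elm Evol by (auto simp: fmeasurable_def)
  hence epsK2: "\<epsilon> \<le> K * (CF * sqrt (deficit E))" using epsK Kpos
    by (meson less_imp_le mult_left_mono order_trans)
  have rr1: "r ^ (N - 1) = 1 / \<omega> powr ((real N - 1) / real N)"
  proof -
    have "r ^ (N - 1) = r powr (real (N - 1))" using rpos by (simp add: powr_realpow)
    also have "\<dots> = (1/\<omega>) powr (1 / real N * real (N - 1))" by (simp add: r_def powr_powr)
    also have "real (N - 1) = real N - 1" using N2' by simp
    also have "(1/\<omega>) powr (1 / real N * (real N - 1)) = 1 / \<omega> powr ((real N - 1) / real N)"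
      using \<omega>pos by (simp add: powr_divide)
    finally show ?thesis .
  qed
  have rr2: "1 / r = \<omega> powr (1 / real N)"
    using \<omega>pos by (simp add: r_def powr_divide)
  have eqc: "c = unit_ball_vol (real N - 1) / \<omega> powr ((real N - 1) / real N)"
    unfolding c_def rr1 by simp
  have eqr: "1 / (2 * r) = \<omega> powr (1 / real N) / 2"
    using rr2 by (metis divide_divide_eq_left mult.commute)
  have eqK: "K = (unit_ball_vol (real N - 1) / \<omega> powr ((real N - 1) / real N) + \<omega> powr (1 / real N) / 2) * D"
    unfolding K_def eqc eqr ..
  show ?thesis
    using epsK2 unfolding eqK \<epsilon>_def He[symmetric] N_def \<omega>_def by (simp add: mult_ac)
qed

end
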